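(* For every positive integer $n$, the average value of the Wiener index over $\mathcal{G}_n$ is $$W_{avr}(\mathcal{G}_n)=\frac{1}{|\mathcal{G}_n|}\sum_{G\in\mathcal{G}_n}W(G)=\frac13\left(25n^3+60n^2-4n\right).$$
   Context: The Wiener index is $W(G)=\sum_{\{u,v\}\subseteq V(G)}d_G(u,v)$, $d_G$ the shortest-path distance. A spiro hexagonal chain $G_n=H_0H_1\cdots H_{n-1}$ with $n$ hexagons is a connected graph whose blocks are hexagons (6-cycles) $H_0,\dots,H_{n-1}$, each hexagon having at most two cut-vertices, each cut-vertex shared by exactly two hexagons, and $H_{k-1},H_k$ sharing the cut-vertex $c_k$ ($1\le k\le n-1$). For $1\le i\le n-2$, the hexagon $H_i$ is labelled $O$, $M$ or $P$ according as the distance in $H_i$ between $c_i$ and $c_{i+1}$ is $1$, $2$ or $3$; the word $x_1x_2\cdots x_{n-2}$ over $\{O,M,P\}$ is the code of the chain (empty if $n\le2$). The code determines the chain up to isomorphism, and a code and its reverse describe the same chain. $\mathcal{G}_n$ denotes the set of all spiro hexagonal chains with $n$ hexagons, i.e. one chain for each class of codes of length $n-2$ under identification of a word with its reverse (so $|\mathcal{G}_n|=\frac12(3^{n-2}+3^{\lfloor (n-1)/2\rfloor})$ for $n\ge2$). *)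

theory Defs
  imports Complex_Main
begin

text \<open>Hexagon labels O (ortho), M (meta), P (para): distance 1, 2, 3 in the hexagon
between its two cut-vertices.\<close>
datatype hexlab = Ortho | Meta | Para

fun lab_dist :: "hexlab \<Rightarrow> nat" where
  "lab_dist Ortho = 1" | "lab_dist Meta = 2" | "lab_dist Para = 3"

text \<open>Hexagon H_k has positions 0..5 around the 6-cycle.  For k \<ge> 1, position 0
of H_k is the cut-vertex c_k shared with H_(k-1).  cutpos xs k is the position in H_k
of the cut-vertex c_(k+1) shared with H_(k+1); for H_0 it is chosen as 3
(irrelevant up to isomorphism, H_0 has only one cut-vertex), and for
1 \<le> k \<le> n-2 it is the distance given by the code letter x_k.\<close>
definition cutpos :: "hexlab list \<Rightarrow> nat \<Rightarrow> nat" where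
  "cutpos xs k = (if k = 0 then 3 else lab_dist (xs ! (k - 1)))"

definition rep :: "hexlab list \<Rightarrow> nat \<Rightarrow> nat \<Rightarrow> nat \<times> nat" where
  "rep xs k j = (if 0 < k \<and> j = 0 then (k - 1, cutpos xs (k - 1)) else (k, j))"

definition spiro_V :: "nat \<Rightarrow> hexlab list \<Rightarrow> (nat \<times> nat) set" where
  "spiro_V n xs = {(0, j) | j. j < 6} \<union> {(k, j) | k j. 1 \<le> k \<and> k < n \<and> 1 \<le> j \<and> j < 6}"

definition spiro_E :: "nat \<Rightarrow> hexlab list \<Rightarrow> ((nat \<times> nat) \<times> (nat \<times> nat)) set" where
  "spiro_E n xs =
     {(rep xs k j, rep xs k ((j + 1) mod 6)) | k j. k < n \<and> j < 6} \<union>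
     {(rep xs k ((j + 1) mod 6), rep xs k j) | k j. k < n \<and> j < 6}"

definition gdist :: "('a \<times> 'a) set \<Rightarrow> 'a \<Rightarrow> 'a \<Rightarrow> nat" where
  "gdist E u v = (LEAST m. (u, v) \<in> E ^^ m)"

text \<open>Wiener index: sum of distances over unordered pairs of distinct vertices
(= half of the sum over ordered pairs).\<close>
definition wiener :: "'a set \<Rightarrow> ('a \<times> 'a) set \<Rightarrow> real" where
  "wiener V E = (\<Sum>u\<in>V. \<Sum>v\<in>V. real (gdist E u v)) / 2"

definition spiro_wiener :: "nat \<Rightarrow> hexlab list \<Rightarrow> real" where
  "spiro_wiener n xs = wiener (spiro_V n xs) (spiro_E n xs)"

text \<open>The set \<G>_n: codes of length n-2 identified with their reverses.\<close>
definition spiro_classes :: "nat \<Rightarrow> hexlab list set set" where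
  "spiro_classes n = {{xs, rev xs} | xs. length xs = n - 2}"

end

theory Submission
  imports Defs
begin

definition hx :: "nat \<Rightarrow> nat \<Rightarrow> nat" where
  "hx a b = (let d = (if a \<le> b then b - a else a - b) in min d (6 - d))"

lemma less6: "(a::nat) < 6 \<longleftrightarrow> a \<in> {0,1,2,3,4,5}" by auto

lemma hx_sym: "hx a b = hx b a" by (auto simp: hx_def Let_def)
lemma hx_same[simp]: "hx a a = 0" by (simp add: hx_def)
lemma hx_0: "a < 6 \<Longrightarrow> b < 6 \<Longrightarrow> hx a b = 0 \<longleftrightarrow> a = b"
  unfolding less6 by (auto simp: hx_def)
lemma hx_lip: "q < 6 \<Longrightarrow> j < 6 \<Longrightarrow> hx q ((j+1) mod 6) \<le> hx q j + 1 \<and> hx q j \<le> hx q ((j+1) mod 6) + 1"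
  unfolding less6 by (auto simp: hx_def)
lemma hx_step: "a < 6 \<Longrightarrow> b < 6 \<Longrightarrow> a \<noteq> b \<Longrightarrow>
   hx ((a+1) mod 6) b + 1 = hx a b \<or> hx ((a+5) mod 6) b + 1 = hx a b"
  unfolding less6 by (auto simp: hx_def)
lemma hx_0c: "c \<in> {1,2,3} \<Longrightarrow> hx 0 c = c" by (auto simp: hx_def)
lemma hx_sum_all_r: "(\<Sum>a<6::nat. \<Sum>b<6::nat. real (hx a b)) = 54"
  by (simp add: hx_def lessThan_nat_numeral)
lemma hx_sum_B_r: "(\<Sum>a\<in>{1..<6::nat}. \<Sum>b\<in>{1..<6::nat}. real (hx a b)) = 36"
  by (simp add: hx_def atLeastLessThanSuc numeral_eq_Suc)
lemma hx_sum_0_r: "(\<Sum>b\<in>{1..<6::nat}. real (hx 0 b)) = 9"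
  by (simp add: hx_def atLeastLessThanSuc numeral_eq_Suc)
lemma hx_sum_3_r: "(\<Sum>a<6::nat. real (hx a 3)) = 9"
  by (simp add: hx_def lessThan_nat_numeral)
lemma hx_sum_all: "(\<Sum>a<6. \<Sum>b<6. hx a b) = 54"
  by (simp add: hx_def lessThan_nat_numeral)
lemma hx_sum_B: "(\<Sum>a\<in>{1..<6}. \<Sum>b\<in>{1..<6}. hx a b) = 36"
  by (simp add: hx_def atLeastLessThanSuc numeral_eq_Suc)
lemma hx_sum_0: "(\<Sum>b\<in>{1..<6}. hx 0 b) = 9"
  by (simp add: hx_def atLeastLessThanSuc numeral_eq_Suc)
lemma hx_sum_3: "(\<Sum>a<6. hx a 3) = 9"
  by (simp add: hx_def lessThan_nat_numeral)
lemma hx_sum_c: "c \<in> {1,2,3} \<Longrightarrow> (\<Sum>b\<in>{1..<6}. hx b c) = 9 - c"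
  by (auto simp add: hx_def atLeastLessThanSuc numeral_eq_Suc)


lemma cp_range: "cutpos xs t \<in> {1,2,3}"
proof (cases "t = 0")
  case False
  then show ?thesis unfolding cutpos_def by (cases "xs ! (t - 1)") auto
qed (simp add: cutpos_def)

lemma cp_pos: "cutpos xs t \<noteq> 0" using cp_range[of xs t] by auto
lemma cp_lt6: "cutpos xs t < 6" using cp_range[of xs t] by auto
lemma hx_0cp: "hx 0 (cutpos xs t) = cutpos xs t" using hx_0c[OF cp_range] .

definition Q :: "hexlab list \<Rightarrow> nat \<Rightarrow> nat" where
  "Q xs i = (\<Sum>t\<in>{1..<i}. cutpos xs t)"

lemma Q_Suc: "1 \<le> i \<Longrightarrow> Q xs (Suc i) = Q xs i + cutpos xs i"
  unfolding Q_def by (simp add: sum.atLeastLessThan_Suc)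

lemma Q_mono: "i \<le> j \<Longrightarrow> Q xs i \<le> Q xs j"
  unfolding Q_def by (rule sum_mono2) auto

fun dd :: "hexlab list \<Rightarrow> nat \<times> nat \<Rightarrow> nat \<times> nat \<Rightarrow> nat" where
  "dd xs (k,a) (l,b) = (if k = l then hx a b
     else if k < l then hx a (cutpos xs k) + (Q xs l - Q xs (Suc k)) + hx 0 b
     else hx b (cutpos xs l) + (Q xs k - Q xs (Suc l)) + hx 0 a)"

lemma dd_sym: "dd xs u v = dd xs v u"
  by (cases u; cases v) (auto simp: hx_sym)

lemma V_iff: "(k,a) \<in> spiro_V n xs \<longleftrightarrow> (k = 0 \<and> a < 6) \<or> (1 \<le> k \<and> k < n \<and> 1 \<le> a \<and> a < 6)"
  unfolding spiro_V_def by auto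

lemma rep_home: "(k,a) \<in> spiro_V n xs \<Longrightarrow> rep xs k a = (k,a)"
  unfolding V_iff rep_def by auto

lemma hex_view:
  assumes u: "u \<in> spiro_V n xs" and k: "k < n"
  shows "\<exists>q \<alpha>. q < 6 \<and> (\<forall>p<6. dd xs u (rep xs k p) = \<alpha> + hx q p)"
proof -
  obtain ku a where ue: "u = (ku,a)" by (cases u)
  have ua: "a < 6" "ku = 0 \<or> (1 \<le> a \<and> ku < n)" using u unfolding ue V_iff by auto
  consider "ku = k" | "ku < k" | "k < ku" by linarith
  then show ?thesis
  proof cases
    case 1
    show ?thesis
    proof (intro exI conjI allI impI)
      show "a < 6" by fact
      fix p :: nat assume p: "p < 6"
      show "dd xs u (rep xs k p) = 0 + hx a p"
      proof (cases "0 < k \<and> p = 0")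
        case True
        then show ?thesis using 1 by (auto simp: ue rep_def hx_sym)
      next
        case False
        then show ?thesis using 1 by (auto simp: ue rep_def)
      qed
    qed
  next
    case 2
    show ?thesis
    proof (intro exI conjI allI impI)
      show "(0::nat) < 6" by simp
      fix p :: nat assume p: "p < 6"
      show "dd xs u (rep xs k p) = (hx a (cutpos xs ku) + (Q xs k - Q xs (Suc ku))) + hx 0 p"
      proof (cases "p = 0")
        case True
        have k0: "0 < k" using 2 by simp
        show ?thesis
        proof (cases "ku = k - 1")
          case True
          then show ?thesis using k0 \<open>p=0\<close> by (auto simp: ue rep_def)
        next
          case False
          then have lt: "ku < k - 1" using 2 by simp
          have "Q xs k = Q xs (k-1) + cutpos xs (k-1)"
            using Q_Suc[of "k-1" xs] lt k0 by simp
          moreover have "Q xs (Suc ku) \<le> Q xs (k-1)" using lt by (intro Q_mono) simp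
          ultimately show ?thesis using k0 \<open>p=0\<close> lt apply (simp add: ue rep_def hx_0cp) by linarith
        qed
      next
        case False
        then show ?thesis using 2 by (auto simp: ue rep_def)
      qed
    qed
  next
    case 3
    show ?thesis
    proof (intro exI conjI allI impI)
      show "cutpos xs k < 6" by (rule cp_lt6)
      fix p :: nat assume p: "p < 6"
      show "dd xs u (rep xs k p) = ((Q xs ku - Q xs (Suc k)) + hx 0 a) + hx (cutpos xs k) p"
      proof (cases "0 < k \<and> p = 0")
        case True
        have "Q xs (Suc k) = Q xs k + cutpos xs k" using True by (intro Q_Suc) simp
        moreover have "Q xs (Suc k) \<le> Q xs ku" using 3 by (intro Q_mono) simp
        ultimately show ?thesis using True 3 by (auto simp: ue rep_def hx_sym hx_0cp)
      next
        case False
        then show ?thesis using 3 by (auto simp: ue rep_def hx_sym)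
      qed
    qed
  qed
qed


lemma dd_self[simp]: "dd xs u u = 0" by (cases u) simp

lemma edge_cases:
  assumes "(x,y) \<in> spiro_E n xs"
  shows "\<exists>k j. k < n \<and> j < 6 \<and> ((x,y) = (rep xs k j, rep xs k ((j+1) mod 6)) \<or>
                                   (x,y) = (rep xs k ((j+1) mod 6), rep xs k j))"
  using assms unfolding spiro_E_def by blast

lemma E1: "k < n \<Longrightarrow> j < 6 \<Longrightarrow> (rep xs k j, rep xs k ((j+1) mod 6)) \<in> spiro_E n xs"
  unfolding spiro_E_def by blast
lemma E2: "k < n \<Longrightarrow> j < 6 \<Longrightarrow> (rep xs k ((j+1) mod 6), rep xs k j) \<in> spiro_E n xs"
  unfolding spiro_E_def by blast

lemma E_sym: "(x,y) \<in> spiro_E n xs \<Longrightarrow> (y,x) \<in> spiro_E n xs"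
  unfolding spiro_E_def by blast

lemma lip:
  assumes u: "u \<in> spiro_V n xs" and e: "(w,v) \<in> spiro_E n xs"
  shows "dd xs u v \<le> dd xs u w + 1"
proof -
  obtain k j where kj: "k < n" "j < 6" and
    c: "(w,v) = (rep xs k j, rep xs k ((j+1) mod 6)) \<or> (w,v) = (rep xs k ((j+1) mod 6), rep xs k j)"
    using edge_cases[OF e] by blast
  obtain q \<alpha> where q: "q < 6" and h: "\<And>p. p < 6 \<Longrightarrow> dd xs u (rep xs k p) = \<alpha> + hx q p"
    using hex_view[OF u kj(1)] by blast
  have j1: "(j+1) mod 6 < 6" by simp
  from c show ?thesis
    using h[OF kj(2)] h[OF j1] hx_lip[OF q kj(2)] by auto
qed

lemma lower:
  assumes u: "u \<in> spiro_V n xs"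
  shows "(u,v) \<in> spiro_E n xs ^^ m \<Longrightarrow> dd xs u v \<le> m"
proof (induction m arbitrary: v)
  case 0
  then show ?case by simp
next
  case (Suc m)
  then obtain w where "(u,w) \<in> spiro_E n xs ^^ m" "(w,v) \<in> spiro_E n xs"
    by (auto elim: relpow_Suc_E)
  then show ?case using Suc.IH lip[OF u, of w v] by fastforce
qed

lemma relpow_sym:
  "(u,v) \<in> spiro_E n xs ^^ m \<Longrightarrow> (v,u) \<in> spiro_E n xs ^^ m"
proof (induction m arbitrary: v)
  case 0 then show ?case by simp
next
  case (Suc m)
  then obtain w where "(u,w) \<in> spiro_E n xs ^^ m" "(w,v) \<in> spiro_E n xs"
    by (auto elim: relpow_Suc_E)
  then show ?case using Suc.IH by (blast intro: relpow_Suc_I2 E_sym)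
qed

lemma mod5: "(a::nat) < 6 \<Longrightarrow> ((a + 5) mod 6 + 1) mod 6 = a"
  unfolding less6 by auto

lemma hex_path:
  assumes k: "k < n" and b: "b < 6"
  shows "a < 6 \<Longrightarrow> (rep xs k a, rep xs k b) \<in> spiro_E n xs ^^ (hx a b)"
proof (induction "hx a b" arbitrary: a)
  case 0
  then have "a = b" using hx_0[OF _ b] by metis
  then show ?case by simp
next
  case (Suc d)
  have ab: "a \<noteq> b" using Suc.hyps(2) by auto
  consider "hx ((a+1) mod 6) b + 1 = hx a b" | "hx ((a+5) mod 6) b + 1 = hx a b"
    using hx_step[OF Suc.prems b ab] by blast
  then show ?case
  proof cases
    case 1
    have "(rep xs k ((a+1) mod 6), rep xs k b) \<in> spiro_E n xs ^^ d"
    proof -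
      have dd': "d = hx ((a+1) mod 6) b" using Suc.hyps(2) 1 by simp
      have "((a+1) mod 6) < 6" by simp
      from Suc.hyps(1)[OF dd' this] show ?thesis using dd' by simp
    qed
    moreover have "(rep xs k a, rep xs k ((a+1) mod 6)) \<in> spiro_E n xs"
      using E1[OF k Suc.prems] .
    ultimately show ?thesis using Suc.hyps(2) by (metis relpow_Suc_I2)
  next
    case 2
    have "(rep xs k ((a+5) mod 6), rep xs k b) \<in> spiro_E n xs ^^ d"
    proof -
      have dd': "d = hx ((a+5) mod 6) b" using Suc.hyps(2) 2 by simp
      have "((a+5) mod 6) < 6" by simp
      from Suc.hyps(1)[OF dd' this] show ?thesis using dd' by simp
    qed
    moreover have "(rep xs k a, rep xs k ((a+5) mod 6)) \<in> spiro_E n xs"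
      using E2[OF k, of "(a+5) mod 6" xs] mod5[OF Suc.prems] by simp
    ultimately show ?thesis using Suc.hyps(2) by (metis relpow_Suc_I2)
  qed
qed

lemma rep_next: "rep xs (Suc l) 0 = rep xs l (cutpos xs l)"
  unfolding rep_def using cp_pos[of xs l] by simp

lemma chain:
  assumes "1 \<le> k" "k \<le> l"
  shows "l < n \<Longrightarrow> (rep xs k 0, rep xs l 0) \<in> spiro_E n xs ^^ (Q xs l - Q xs k)"
  using assms(2)
proof (induction l rule: dec_induct)
  case base
  then show ?case by simp
next
  case (step l)
  have l1: "1 \<le> l" using assms(1) step.hyps(1) by simp
  have A: "(rep xs k 0, rep xs l 0) \<in> spiro_E n xs ^^ (Q xs l - Q xs k)"
    using step by simp
  have B: "(rep xs l 0, rep xs (Suc l) 0) \<in> spiro_E n xs ^^ (cutpos xs l)"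
    using hex_path[of l n "cutpos xs l" 0 xs] step.prems cp_lt6[of xs l]
    by (simp add: rep_next hx_0cp)
  have "Q xs (Suc l) - Q xs k = (Q xs l - Q xs k) + cutpos xs l"
    using Q_Suc[OF l1, of xs] Q_mono[OF step.hyps(1), of xs] by simp
  then show ?case using A B relpow_add[of "Q xs l - Q xs k" "cutpos xs l" "spiro_E n xs"]
    by auto
qed

lemma upper_lt:
  assumes u: "(k,a) \<in> spiro_V n xs" and v: "(l,b) \<in> spiro_V n xs" and kl: "k < l"
  shows "((k,a),(l,b)) \<in> spiro_E n xs ^^ dd xs (k,a) (l,b)"
proof -
  have ln: "l < n" "k < n" "a < 6" "b < 6" using u v kl unfolding V_iff by auto
  have P1: "(rep xs k a, rep xs k (cutpos xs k)) \<in> spiro_E n xs ^^ hx a (cutpos xs k)"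
    using hex_path[OF ln(2) cp_lt6 ln(3)] .
  have P2: "(rep xs (Suc k) 0, rep xs l 0) \<in> spiro_E n xs ^^ (Q xs l - Q xs (Suc k))"
    using chain[of "Suc k" l n xs] kl ln by simp
  have P3: "(rep xs l 0, rep xs l b) \<in> spiro_E n xs ^^ hx 0 b"
    using hex_path[OF ln(1) ln(4)] by simp
  have "(rep xs k a, rep xs l b) \<in> spiro_E n xs ^^ (hx a (cutpos xs k) + (Q xs l - Q xs (Suc k)) + hx 0 b)"
    using P1 P2 P3 unfolding relpow_add rep_next[symmetric] by blast
  then show ?thesis using kl rep_home[OF u] rep_home[OF v] by simp
qed

lemma upper:
  assumes n: "1 \<le> n" and u: "u \<in> spiro_V n xs" and v: "v \<in> spiro_V n xs"
  shows "(u,v) \<in> spiro_E n xs ^^ dd xs u v"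
proof -
  obtain k a l b where e: "u = (k,a)" "v = (l,b)" by (cases u, cases v)
  consider "k = l" | "k < l" | "l < k" by linarith
  then show ?thesis
  proof cases
    case 1
    have "k < n" "a < 6" "b < 6" using u v n unfolding e V_iff by auto
    then show ?thesis using hex_path[of k n b a xs] rep_home[OF u[unfolded e]]
      rep_home[OF v[unfolded e]] 1 by (simp add: e)
  next
    case 2
    then show ?thesis using upper_lt u v e by simp
  next
    case 3
    then have "(v,u) \<in> spiro_E n xs ^^ dd xs v u" using upper_lt u v e by simp
    then show ?thesis using relpow_sym dd_sym by metis
  qed
qed

lemma gdist_dd:
  assumes n: "1 \<le> n" and u: "u \<in> spiro_V n xs" and v: "v \<in> spiro_V n xs"
  shows "gdist (spiro_E n xs) u v = dd xs u v"
  unfolding gdist_def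
  by (rule Least_equality) (use upper[OF n u v] lower[OF u] in auto)

lemma spiro_wiener_dd:
  "1 \<le> n \<Longrightarrow> spiro_wiener n xs = (\<Sum>u\<in>spiro_V n xs. \<Sum>v\<in>spiro_V n xs. real (dd xs u v)) / 2"
  unfolding spiro_wiener_def wiener_def
  by (simp add: gdist_dd cong: sum.cong)


lemma V_Suc: "1 \<le> n \<Longrightarrow> spiro_V (Suc n) xs = spiro_V n xs \<union> Pair n ` {1..<6}"
  unfolding spiro_V_def by auto

lemma V_disj: "1 \<le> n \<Longrightarrow> spiro_V n xs \<inter> Pair n ` {1..<6} = {}"
  unfolding spiro_V_def by auto

lemma V_1: "spiro_V 1 xs = Pair 0 ` {..<6}"
  unfolding spiro_V_def by auto

lemma V_fin: "finite (spiro_V n xs)"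
  by (rule finite_subset[of _ "{..n} \<times> {..<6}"]) (auto simp: spiro_V_def)

lemma card_B: "card (Pair n ` {1..<6::nat}) = 5"
  by (simp add: card_image inj_on_def)

lemma fin_B: "finite (Pair n ` {1..<6::nat})" by simp

lemma V_card: "1 \<le> n \<Longrightarrow> card (spiro_V n xs) = 5 * n + 1"
proof (induction n rule: nat_induct_at_least)
  case base
  show ?case by (subst V_1) (simp add: card_image inj_on_def)
next
  case (Suc n)
  then show ?case
    unfolding V_Suc[OF Suc.hyps(1)] card_Un_disjoint[OF V_fin fin_B V_disj[OF Suc.hyps(1)]] card_B
    by simp
qed

fun rho :: "hexlab list \<Rightarrow> nat \<Rightarrow> nat \<times> nat \<Rightarrow> nat" where
  "rho xs n (k,a) = hx a (cutpos xs k) + (Q xs n - Q xs (Suc k))"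

lemma dd_B: "1 \<le> n \<Longrightarrow> u \<in> spiro_V n xs \<Longrightarrow> dd xs u (n,b) = rho xs n u + hx 0 b"
  by (cases u) (auto simp: V_iff)

lemma rho_Suc: "1 \<le> n \<Longrightarrow> u \<in> spiro_V n xs \<Longrightarrow> rho xs (Suc n) u = rho xs n u + cutpos xs n"
proof (cases u)
  case (Pair k a)
  assume n: "1 \<le> n" and u: "u \<in> spiro_V n xs"
  then have k: "k < n" using Pair by (auto simp: V_iff)
  have "Q xs (Suc k) \<le> Q xs n" using k by (intro Q_mono) simp
  then show ?thesis using Pair Q_Suc[OF n, of xs] by simp
qed

definition RR :: "hexlab list \<Rightarrow> nat \<Rightarrow> real" where
  "RR xs n = (\<Sum>u\<in>spiro_V n xs. real (rho xs n u))"

lemma sum_B: "(\<Sum>u\<in>Pair n ` {1..<6}. f u) = (\<Sum>b\<in>{1..<6}. f (n,b))"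
  by (subst sum.reindex) (auto simp: inj_on_def)

lemma hx_sum_c_real: "(\<Sum>b\<in>{1..<6::nat}. real (hx b (cutpos xs n))) = 9 - real (cutpos xs n)"
proof -
  have "(\<Sum>b\<in>{1..<6::nat}. real (hx b (cutpos xs n))) = real (\<Sum>b\<in>{1..<6::nat}. hx b (cutpos xs n))"
    by simp
  also have "\<dots> = real (9 - cutpos xs n)" using hx_sum_c[OF cp_range] by simp
  also have "\<dots> = 9 - real (cutpos xs n)" using cp_range[of xs n] by auto
  finally show ?thesis .
qed

lemma RR_formula: "1 \<le> n \<Longrightarrow> RR xs n = 9 * real n + 5 * (\<Sum>t\<in>{1..<n}. real (cutpos xs t) * real t)"
proof (induction n rule: nat_induct_at_least)
  case base
  have "RR xs 1 = (\<Sum>a<6. real (hx a 3))"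
    unfolding RR_def V_1 by (subst sum.reindex) (auto simp: inj_on_def cutpos_def)
  also have "\<dots> = 9" by (rule hx_sum_3_r)
  finally show ?case by simp
next
  case (Suc n)
  have n: "1 \<le> n" by fact
  have "RR xs (Suc n) = (\<Sum>u\<in>spiro_V n xs. real (rho xs (Suc n) u))
          + (\<Sum>b\<in>{1..<6}. real (rho xs (Suc n) (n,b)))"
    unfolding RR_def V_Suc[OF n] sum.union_disjoint[OF V_fin fin_B V_disj[OF n]] sum_B ..
  also have "(\<Sum>u\<in>spiro_V n xs. real (rho xs (Suc n) u)) = RR xs n + real (5*n+1) * real (cutpos xs n)"
    unfolding RR_def using rho_Suc[OF n] V_card[OF n, of xs]
    by (simp add: sum.distrib cong: sum.cong)
  also have "(\<Sum>b\<in>{1..<6}. real (rho xs (Suc n) (n,b))) = 9 - real (cutpos xs n)"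
    using hx_sum_c_real[of xs n] by simp
  finally have "RR xs (Suc n) = RR xs n + real (5 * n + 1) * real (cutpos xs n) + (9 - real (cutpos xs n))" .
  moreover have "(\<Sum>t\<in>{1..<Suc n}. real (cutpos xs t) * real t) = (\<Sum>t\<in>{1..<n}. real (cutpos xs t) * real t) + real (cutpos xs n) * real n"
    using n by (simp add: sum.atLeastLessThan_Suc)
  ultimately show ?case using Suc.IH by (simp add: algebra_simps)
qed

definition SS :: "hexlab list \<Rightarrow> nat \<Rightarrow> real" where
  "SS xs n = (\<Sum>u\<in>spiro_V n xs. \<Sum>v\<in>spiro_V n xs. real (dd xs u v))"

lemma cross_sum: "1 \<le> n \<Longrightarrow>
  (\<Sum>u\<in>spiro_V n xs. \<Sum>b\<in>{1..<6}. real (dd xs u (n,b))) = 5 * RR xs n + 9 * real (5*n+1)"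
proof -
  assume n: "1 \<le> n"
  have h9: "(\<Sum>b\<in>{1..<6::nat}. real (hx 0 b)) = 9"
    by (rule hx_sum_0_r)
  have "(\<Sum>u\<in>spiro_V n xs. \<Sum>b\<in>{1..<6}. real (dd xs u (n,b)))
      = (\<Sum>u\<in>spiro_V n xs. 5 * real (rho xs n u) + 9)"
    using dd_B[OF n] h9 by (simp add: sum.distrib)
  also have "\<dots> = 5 * RR xs n + 9 * real (5*n+1)"
    unfolding RR_def using V_card[OF n, of xs] by (simp add: sum.distrib sum_distrib_left)
  finally show ?thesis .
qed

lemma SS_formula: "1 \<le> n \<Longrightarrow> SS xs n = 54 * real n + 90 * real n * (real n - 1)
   + 50 * (\<Sum>t\<in>{1..<n}. real (cutpos xs t) * real t * (real n - 1 - real t))"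
proof (induction n rule: nat_induct_at_least)
  case base
  have "SS xs 1 = (\<Sum>a<6. \<Sum>b<6. real (hx a b))"
    unfolding SS_def V_1 by (simp add: sum.reindex inj_on_def)
  also have "\<dots> = 54" by (rule hx_sum_all_r)
  finally show ?case by simp
next
  case (Suc n)
  have n: "1 \<le> n" by fact
  let ?V = "spiro_V n xs" and ?B = "Pair n ` {1..<6::nat}"
  have fB: "finite ?B" by simp
  have split: "\<And>f. (\<Sum>u\<in>spiro_V (Suc n) xs. f u) = (\<Sum>u\<in>?V. f u) + (\<Sum>u\<in>?B. f u)"
    unfolding V_Suc[OF n] by (rule sum.union_disjoint[OF V_fin fin_B V_disj[OF n]])
  have "SS xs (Suc n) = (\<Sum>u\<in>?V. \<Sum>v\<in>?V. real (dd xs u v)) + (\<Sum>u\<in>?V. \<Sum>v\<in>?B. real (dd xs u v))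
       + ((\<Sum>u\<in>?B. \<Sum>v\<in>?V. real (dd xs u v)) + (\<Sum>u\<in>?B. \<Sum>v\<in>?B. real (dd xs u v)))"
    unfolding SS_def split by (simp add: sum.distrib)
  also have "(\<Sum>u\<in>?B. \<Sum>v\<in>?V. real (dd xs u v)) = (\<Sum>u\<in>?V. \<Sum>v\<in>?B. real (dd xs u v))"
    by (subst sum.swap) (simp add: dd_sym)
  also have "(\<Sum>u\<in>?V. \<Sum>v\<in>?B. real (dd xs u v)) = 5 * RR xs n + 9 * real (5*n+1)"
    unfolding sum_B by (rule cross_sum[OF n])
  also have "(\<Sum>u\<in>?B. \<Sum>v\<in>?B. real (dd xs u v)) = 36"
  proof -
    have "(\<Sum>u\<in>?B. \<Sum>v\<in>?B. real (dd xs u v)) = (\<Sum>a\<in>{1..<6}. \<Sum>b\<in>{1..<6}. real (hx a b))"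
      unfolding sum_B by simp
    also have "\<dots> = 36" by (rule hx_sum_B_r)
    finally show ?thesis .
  qed
  finally have rec: "SS xs (Suc n) = SS xs n + 10 * RR xs n + 18 * real (5*n+1) + 36"
    unfolding SS_def by simp
  have sumrec: "(\<Sum>t\<in>{1..<Suc n}. real (cutpos xs t) * real t * (real (Suc n) - 1 - real t))
     = (\<Sum>t\<in>{1..<n}. real (cutpos xs t) * real t * (real n - 1 - real t)) + (\<Sum>t\<in>{1..<n}. real (cutpos xs t) * real t)"
    using n by (simp add: sum.atLeastLessThan_Suc sum.distrib[symmetric] algebra_simps)
  show ?case using rec sumrec Suc.IH RR_formula[OF n, of xs] by (simp add: algebra_simps)
qed


definition Psi :: "hexlab list \<Rightarrow> real" where
  "Psi xs = (\<Sum>i<length xs. real (lab_dist (xs ! i)) * (real i + 1) * (real (length xs) - real i))"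

definition wsum :: "nat \<Rightarrow> real" where
  "wsum m = (\<Sum>i<m. (real i + 1) * (real m - real i))"

lemma Phi_Psi:
  assumes n: "1 \<le> n" and len: "length xs = n - 2"
  shows "(\<Sum>t\<in>{1..<n}. real (cutpos xs t) * real t * (real n - 1 - real t)) = Psi xs"
proof (cases "n = 1")
  case True
  then show ?thesis using len by (simp add: Psi_def)
next
  case False
  define m where "m = n - 2"
  have nm: "n = Suc (Suc m)" using n False unfolding m_def by arith
  have lm: "length xs = m" using len nm by simp
  have "(\<Sum>t\<in>{1..<n}. real (cutpos xs t) * real t * (real n - 1 - real t))
      = (\<Sum>i\<in>{0..<Suc m}. real (cutpos xs (Suc i)) * real (Suc i) * (real n - 1 - real (Suc i)))"
    unfolding nm One_nat_def by (rule sum.shift_bounds_Suc_ivl)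
  also have "\<dots> = (\<Sum>i<m. real (cutpos xs (Suc i)) * real (Suc i) * (real n - 1 - real (Suc i)))"
    by (simp add: atLeast0LessThan nm)
  also have "\<dots> = Psi xs"
    unfolding Psi_def lm by (rule sum.cong) (auto simp: cutpos_def nm algebra_simps)
  finally show ?thesis .
qed

lemma wiener_formula:
  assumes n: "1 \<le> n" and len: "length xs = n - 2"
  shows "spiro_wiener n xs = 27 * real n + 45 * real n * (real n - 1) + 25 * Psi xs"
  using spiro_wiener_dd[OF n, of xs] SS_formula[OF n, of xs] Phi_Psi[OF n len]
  unfolding SS_def by simp

lemma Psi_rev: "Psi (rev xs) = Psi xs"
proof -
  let ?m = "length xs"
  let ?h = "\<lambda>j. real (lab_dist (xs ! j)) * (real ?m - real j) * (real j + 1)"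
  have "Psi (rev xs) = (\<Sum>i<?m. ?h (?m - Suc i))"
    unfolding Psi_def by (rule sum.cong) (auto simp: rev_nth of_nat_diff algebra_simps)
  also have "\<dots> = (\<Sum>i<?m. ?h i)" by (rule sum.nat_diff_reindex)
  also have "\<dots> = Psi xs" unfolding Psi_def by (rule sum.cong) (auto simp: algebra_simps)
  finally show ?thesis .
qed

fun swp :: "hexlab \<Rightarrow> hexlab" where
  "swp Ortho = Para" | "swp Para = Ortho" | "swp Meta = Meta"

lemma swp_swp[simp]: "swp (swp x) = x" by (cases x) auto
lemma lab_swp: "real (lab_dist (swp x)) = 4 - real (lab_dist x)" by (cases x) auto

lemma Psi_swp: "Psi (map swp xs) = 4 * wsum (length xs) - Psi xs"
proof -
  let ?m = "length xs"
  have "Psi (map swp xs) = (\<Sum>i<?m. 4 * ((real i + 1) * (real ?m - real i))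
        - real (lab_dist (xs ! i)) * (real i + 1) * (real ?m - real i))"
    unfolding Psi_def by (rule sum.cong) (auto simp: lab_swp algebra_simps)
  also have "\<dots> = 4 * wsum ?m - Psi xs"
    unfolding Psi_def wsum_def by (simp only: sum_subtractf sum_distrib_left)
  finally show ?thesis .
qed

lemma gauss_r: "(\<Sum>i<m. real i + 1) = real m * (real m + 1) / 2"
proof (induction m)
  case 0 then show ?case by simp
next
  case (Suc m)
  have "(\<Sum>i<Suc m. real i + 1) = (\<Sum>i<m. real i + 1) + (real m + 1)"
    by (rule sum.lessThan_Suc)
  then show ?case using Suc.IH by (simp add: field_simps)
qed

lemma wsum_formula: "wsum m = real m * (real m + 1) * (real m + 2) / 6"
proof (induction m)
  case 0 then show ?case by (simp add: wsum_def)
next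
  case (Suc m)
  have "wsum (Suc m) = (\<Sum>i<m. (real i + 1) * (real m - real i) + (real i + 1)) + (real m + 1)"
    unfolding wsum_def by (simp add: algebra_simps)
  also have "\<dots> = wsum m + real m * (real m + 1) / 2 + (real m + 1)"
    unfolding wsum_def gauss_r[symmetric] by (rule arg_cong[where f="\<lambda>x. x + _"], rule sum.distrib)
  finally show ?case using Suc.IH by (simp add: field_simps)
qed

lemma hexlab_UNIV: "(UNIV :: hexlab set) = {Ortho, Meta, Para}"
proof -
  have "x \<in> {Ortho, Meta, Para}" for x by (cases x) auto
  then show ?thesis by blast
qed

lemma classes_finite: "finite (spiro_classes n)"
proof -
  have "finite {xs :: hexlab list. set xs \<subseteq> UNIV \<and> length xs = n - 2}"
    by (rule finite_lists_length_eq) (simp add: hexlab_UNIV)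
  then have "finite (Pow {xs :: hexlab list. length xs = n - 2})" by simp
  moreover have "spiro_classes n \<subseteq> Pow {xs :: hexlab list. length xs = n - 2}"
    unfolding spiro_classes_def by auto
  ultimately show ?thesis by (rule finite_subset[rotated])
qed

lemma classes_ne: "spiro_classes n \<noteq> {}"
  unfolding spiro_classes_def by (auto intro: exI[of _ "replicate (n-2) Ortho"])

definition phi :: "hexlab list set \<Rightarrow> hexlab list set" where
  "phi c = map swp ` c"

lemma phi_phi: "phi (phi c) = c"
  unfolding phi_def image_image by (simp add: map_idI)

lemma phi_cls: "c \<in> spiro_classes n \<Longrightarrow> phi c \<in> spiro_classes n"
  unfolding spiro_classes_def phi_def by (auto simp: rev_map)

abbreviation AA :: "nat \<Rightarrow> real" where
  "AA n \<equiv> 27 * real n + 45 * real n * (real n - 1)"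

lemma T_eq:
  assumes n: "1 \<le> n" and c: "c \<in> spiro_classes n"
  shows "\<exists>xs. c = {xs, rev xs} \<and> length xs = n - 2 \<and>
           spiro_wiener n (SOME ys. ys \<in> c) = AA n + 25 * Psi xs"
proof -
  obtain xs where xs: "c = {xs, rev xs}" "length xs = n - 2"
    using c unfolding spiro_classes_def by auto
  have "(SOME ys. ys \<in> c) \<in> c" by (rule someI[of _ xs]) (simp add: xs)
  then have "(SOME ys. ys \<in> c) = xs \<or> (SOME ys. ys \<in> c) = rev xs" using xs by auto
  then have "spiro_wiener n (SOME ys. ys \<in> c) = AA n + 25 * Psi xs"
    using wiener_formula[OF n] xs(2) Psi_rev[of xs] by auto
  then show ?thesis using xs by blast
qed

lemma T_pair:
  assumes n: "1 \<le> n" and c: "c \<in> spiro_classes n"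
  shows "spiro_wiener n (SOME ys. ys \<in> c) + spiro_wiener n (SOME ys. ys \<in> phi c)
         = 2 * AA n + 100 * wsum (n - 2)"
proof -
  obtain xs where xs: "c = {xs, rev xs}" "length xs = n - 2"
     "spiro_wiener n (SOME ys. ys \<in> c) = AA n + 25 * Psi xs"
    using T_eq[OF n c] by blast
  obtain zs where zs: "phi c = {zs, rev zs}" "length zs = n - 2"
     "spiro_wiener n (SOME ys. ys \<in> phi c) = AA n + 25 * Psi zs"
    using T_eq[OF n phi_cls[OF c]] by blast
  have "zs \<in> phi c" using zs by simp
  then have "zs = map swp xs \<or> zs = rev (map swp xs)"
    using xs unfolding phi_def by (auto simp: rev_map)
  then have "Psi zs = 4 * wsum (n - 2) - Psi xs"
    using Psi_swp[of xs] Psi_rev xs(2) by auto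
  then show ?thesis using xs zs by simp
qed


lemma final_arith:
  assumes n: "1 \<le> n"
  shows "AA n + 50 * wsum (n - 2) = (25 * real n ^ 3 + 60 * real n ^ 2 - 4 * real n) / 3"
proof (cases "n = 1")
  case True then show ?thesis by (simp add: wsum_def)
next
  case False
  then have r: "real (n - 2) = real n - 2" using n by (simp add: of_nat_diff)
  show ?thesis unfolding wsum_formula r by (simp add: field_simps power3_eq_cube power2_eq_square)
qed

theorem theorem5p2:
  fixes n :: nat
  assumes "n \<ge> 1"
  shows "(\<Sum>c\<in>spiro_classes n. spiro_wiener n (SOME xs. xs \<in> c)) / real (card (spiro_classes n))
         = (25 * real n ^ 3 + 60 * real n ^ 2 - 4 * real n) / 3"
proof -
  let ?C = "spiro_classes n"
  let ?T = "\<lambda>c. spiro_wiener n (SOME xs. xs \<in> c)"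
  let ?K = "2 * AA n + 100 * wsum (n - 2)"
  have swap: "(\<Sum>c\<in>?C. ?T c) = (\<Sum>c\<in>?C. ?T (phi c))"
    by (rule sum.reindex_bij_witness[where i=phi and j=phi]) (auto simp: phi_phi phi_cls)
  have "2 * (\<Sum>c\<in>?C. ?T c) = (\<Sum>c\<in>?C. ?T c + ?T (phi c))"
    using swap by (simp add: sum.distrib)
  also have "\<dots> = (\<Sum>c\<in>?C. ?K)"
    using T_pair[OF assms] by (intro sum.cong) auto
  also have "\<dots> = real (card ?C) * ?K" by simp
  finally have S: "(\<Sum>c\<in>?C. ?T c) = real (card ?C) * ?K / 2" by simp
  have "card ?C > 0" using classes_finite classes_ne by (simp add: card_gt_0_iff)
  then have "(\<Sum>c\<in>?C. ?T c) / real (card ?C) = AA n + 50 * wsum (n - 2)"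
    unfolding S by (simp add: field_simps)
  then show ?thesis using final_arith[OF assms] by simp
qed

end
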